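(* In every approval-based SCV instance, every committee satisfying SW-JR also satisfies weak-SW-JR. Conversely, there exist an approval-based SCV instance and a committee that satisfies weak-SW-JR but not SW-JR.
   Context: An approval-based sub-committee voting (SCV) instance consists of a set of voters $N=\{1,\ldots,n\}$, a finite set of candidates $C$ partitioned into candidate subsets $C_1,\ldots,C_\ell$, positive integer quotas $k_j\le |C_j|$ with $k=\sum_{j=1}^\ell k_j$, and approval ballots $A_i\subseteq C$ for $i\in N$. A committee is a set $W\subseteq C$ with $|W\cap C_j|=k_j$ for every $j$. $W$ satisfies SW-JR if for every $X\subseteq N$ with $|X|\ge n/k$ and $|\bigcap_{i\in X}A_i|\ge 1$ we have $|W\cap \bigcup_{i\in X}A_i|\ge 1$. $W$ satisfies weak-SW-JR if for every $X\subseteq N$ with $|X|\ge n/k$ and $|(\bigcap_{i\in X}A_i)\cap C_j|\ge 1$ for all $j=1,\ldots,\ell$ we have $|W\cap \bigcup_{i\in X}A_i|\ge 1$. *)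

theory Defs
  imports Complex_Main
begin

definition scv_instance ::
  "nat \<Rightarrow> 'c set \<Rightarrow> 'c set list \<Rightarrow> nat list \<Rightarrow> (nat \<Rightarrow> 'c set) \<Rightarrow> bool" where
  "scv_instance n C Cs ks A \<longleftrightarrow>
     n \<ge> 1 \<and> finite C \<and> length Cs \<ge> 1 \<and> length ks = length Cs \<and>
     (\<forall>j < length Cs. Cs ! j \<noteq> {}) \<and>
     (\<forall>j < length Cs. \<forall>j' < length Cs. j \<noteq> j' \<longrightarrow> Cs ! j \<inter> Cs ! j' = {}) \<and>
     (\<Union>j < length Cs. Cs ! j) = C \<and>
     (\<forall>j < length Cs. 1 \<le> ks ! j \<and> ks ! j \<le> card (Cs ! j)) \<and>
     (\<forall>i \<in> {1..n}. A i \<subseteq> C)"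

definition total_k :: "nat list \<Rightarrow> nat" where
  "total_k ks = sum_list ks"

definition committee :: "'c set \<Rightarrow> 'c set list \<Rightarrow> nat list \<Rightarrow> 'c set \<Rightarrow> bool" where
  "committee C Cs ks W \<longleftrightarrow> W \<subseteq> C \<and> (\<forall>j < length Cs. card (W \<inter> Cs ! j) = ks ! j)"

definition SW_JR ::
  "nat \<Rightarrow> 'c set list \<Rightarrow> nat list \<Rightarrow> (nat \<Rightarrow> 'c set) \<Rightarrow> 'c set \<Rightarrow> bool" where
  "SW_JR n Cs ks A W \<longleftrightarrow>
     (\<forall>X \<subseteq> {1..n}. real (card X) \<ge> real n / real (total_k ks) \<and>
        card (\<Inter>i\<in>X. A i) \<ge> 1 \<longrightarrow> card (W \<inter> (\<Union>i\<in>X. A i)) \<ge> 1)"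

definition weak_SW_JR ::
  "nat \<Rightarrow> 'c set list \<Rightarrow> nat list \<Rightarrow> (nat \<Rightarrow> 'c set) \<Rightarrow> 'c set \<Rightarrow> bool" where
  "weak_SW_JR n Cs ks A W \<longleftrightarrow>
     (\<forall>X \<subseteq> {1..n}. real (card X) \<ge> real n / real (total_k ks) \<and>
        (\<forall>j < length Cs. card ((\<Inter>i\<in>X. A i) \<inter> Cs ! j) \<ge> 1) \<longrightarrow>
        card (W \<inter> (\<Union>i\<in>X. A i)) \<ge> 1)"

end

theory Submission
  imports Defs
begin

lemma part1:
  assumes I: "scv_instance n C Cs ks A" and S: "SW_JR n Cs ks A W"
  shows "weak_SW_JR n Cs ks A W"
  unfolding weak_SW_JR_def
proof (intro allI impI)
  fix X assume X: "X \<subseteq> {1..n}" and H: "real n / real (total_k ks) \<le> real (card X) \<and>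
        (\<forall>j < length Cs. card ((\<Inter>i\<in>X. A i) \<inter> Cs ! j) \<ge> 1)"
  have n1: "n \<ge> 1" and fC: "finite C" and l: "length Cs \<ge> 1" and sub: "\<forall>i \<in> {1..n}. A i \<subseteq> C"
    and lk: "length ks = length Cs" and kq: "\<forall>j < length Cs. 1 \<le> ks ! j"
    using I unfolding scv_instance_def by auto
  have "ks ! 0 \<ge> 1" using kq l by (metis One_nat_def Suc_le_lessD)
  moreover have "ks ! 0 \<in> set ks" using lk l by (intro nth_mem) linarith
  moreover have "ks ! 0 \<le> sum_list ks" using lk l by (intro elem_le_sum_list) linarith
  ultimately have "sum_list ks \<ge> 1" by linarith
  hence "real n / real (total_k ks) > 0" using n1 unfolding total_k_def by simp
  hence "card X > 0" using H by linarith
  then obtain x where x: "x \<in> X" by (metis card_gt_0_iff ex_in_conv)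
  have "(\<Inter>i\<in>X. A i) \<subseteq> C" using x X sub by blast
  hence fin: "finite (\<Inter>i\<in>X. A i)" using fC finite_subset by blast
  have l0: "0 < length Cs" using l by linarith
  have "card ((\<Inter>i\<in>X. A i) \<inter> Cs ! 0) \<ge> 1" using H l0 by blast
  hence "(\<Inter>i\<in>X. A i) \<inter> Cs ! 0 \<noteq> {}" by (metis card.empty not_one_le_zero)
  hence "card (\<Inter>i\<in>X. A i) \<ge> 1" using fin
    by (metis One_nat_def Suc_leI card_gt_0_iff disjoint_iff empty_iff)
  thus "card (W \<inter> (\<Union>i\<in>X. A i)) \<ge> 1" using S X H unfolding SW_JR_def by blast
qed

theorem mainTheorem3:
  shows "(\<forall>(n::nat) (C::'c set) Cs ks A W.
            scv_instance n C Cs ks A \<and> committee C Cs ks W \<and> SW_JR n Cs ks A W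
              \<longrightarrow> weak_SW_JR n Cs ks A W)
       \<and> (\<exists>(n::nat) (C::nat set) Cs ks A W.
            scv_instance n C Cs ks A \<and> committee C Cs ks W \<and>
            weak_SW_JR n Cs ks A W \<and> \<not> SW_JR n Cs ks A W)"
proof
  show "\<forall>(n::nat) (C::'c set) Cs ks A W.
            scv_instance n C Cs ks A \<and> committee C Cs ks W \<and> SW_JR n Cs ks A W
              \<longrightarrow> weak_SW_JR n Cs ks A W" using part1 by blast
next
  let ?C = "{0,1,2,3::nat}" and ?Cs = "[{0,1::nat},{2,3}]" and ?ks = "[1,1::nat]"
    and ?A = "\<lambda>i::nat. {0::nat}" and ?W = "{1,2::nat}"
  have a: "scv_instance 1 ?C ?Cs ?ks ?A"
    unfolding scv_instance_def by (auto simp: nth_Cons' lessThan_Suc)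
  have b: "committee ?C ?Cs ?ks ?W"
    unfolding committee_def by (auto simp: nth_Cons')
  have c: "weak_SW_JR 1 ?Cs ?ks ?A ?W"
    unfolding weak_SW_JR_def
  proof (intro allI impI)
    fix X assume X: "X \<subseteq> {1..1::nat}" and H: "real 1 / real (total_k ?ks) \<le> real (card X) \<and>
        (\<forall>j < length ?Cs. card ((\<Inter>i\<in>X. ?A i) \<inter> ?Cs ! j) \<ge> 1)"
    have "X = {} \<or> X = {1}" using X by auto
    moreover have "X \<noteq> {}" using H by (auto simp: total_k_def)
    ultimately have "X = {1}" by blast
    have l1: "(1::nat) < length ?Cs" by simp
    have all: "\<forall>j < length ?Cs. card ((\<Inter>i\<in>X. ?A i) \<inter> ?Cs ! j) \<ge> 1" using H by (rule conjunct2)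
    have "card ((\<Inter>i\<in>X. ?A i) \<inter> ?Cs ! 1) \<ge> 1" by (rule all[rule_format, OF l1])
    hence "card ({0::nat} \<inter> {2,3}) \<ge> 1" using \<open>X = {1}\<close> by simp
    thus "card (?W \<inter> (\<Union>i\<in>X. ?A i)) \<ge> 1" by simp
  qed
  have d: "\<not> SW_JR 1 ?Cs ?ks ?A ?W"
    unfolding SW_JR_def total_k_def
    by (auto intro!: exI[of _ "{1}"])
  show "\<exists>(n::nat) (C::nat set) Cs ks A W.
            scv_instance n C Cs ks A \<and> committee C Cs ks W \<and>
            weak_SW_JR n Cs ks A W \<and> \<not> SW_JR n Cs ks A W"
    using a b c d by blast
qed

end
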